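(* Let $E\subset\mathbb C$ be the unit disc and let $S\subset E\times E$ be a relatively closed set such that $\operatorname{int}S=\varnothing$ and for every domain $U\subset E\times E$ the set $U\setminus S$ is connected. Let $A$ be the set of all $a\in E$ with $\operatorname{int}_{\mathbb C}S_{(a,\cdot)}=\varnothing$, and $B$ the set of all $b\in E$ with $\operatorname{int}_{\mathbb C}S_{(\cdot,b)}=\varnothing$. Then $A$ and $B$ are not thin at any point of $E$; in particular they are dense in $E$, locally regular, and $h^*_{A,E}\equiv h^*_{B,E}\equiv0$ on $E$.
   Context: Fibers: $S_{(a,\cdot)}:=\{w:(a,w)\in S\}$, $S_{(\cdot,b)}:=\{z:(z,b)\in S\}$. A set $A\subset\mathbb C$ is thin at $a\in\mathbb C$ if either $a\notin\overline{A\setminus\{a\}}$ or there is a function $u$ subharmonic near $a$ with $\limsup_{A\setminus\{a\}\ni z\to a}u(z)<u(a)$. For open $\Omega$ and $A\subset\Omega$, $h_{A,\Omega}:=\sup\{u\ \text{subharmonic on }\Omega: u\le1 \text{ on }\Omega,\ u\le0\text{ on }A\}$ and $h^*$ is its upper semicontinuous regularization; $A$ is locally regular if $h^*_{A\cap\Omega,\Omega}(a)=0$ for all $a\in A$ and all open neighborhoods $\Omega$ of $a$. *)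

theory Defs
  imports "HOL-Analysis.Analysis" "HOL-Library.Extended_Real"
begin

text \<open>Subharmonic functions on an open set, with values in [-infinity, +infinity).
  Upper semicontinuity plus the local sub-mean-value inequality. The circle mean of
  the (upper semicontinuous, possibly -infinity valued) function u is expressed via
  continuous real majorants phi of u on the circle: the mean of u over the circle is the
  infimum of the means of such phi.\<close>

definition circle_mean :: "(complex \<Rightarrow> real) \<Rightarrow> complex \<Rightarrow> real \<Rightarrow> real" where
  "circle_mean \<phi> a r = integral {0..2*pi} (\<lambda>t. \<phi> (a + complex_of_real r * cis t)) / (2*pi)"

definition subharmonic_on :: "complex set \<Rightarrow> (complex \<Rightarrow> ereal) \<Rightarrow> bool" where
  "subharmonic_on \<Omega> u \<longleftrightarrow>
     open \<Omega> \<and>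
     (\<forall>z\<in>\<Omega>. u z < \<infinity>) \<and>
     (\<forall>z\<in>\<Omega>. Limsup (at z) u \<le> u z) \<and>
     (\<forall>a\<in>\<Omega>. \<exists>r0>0. \<forall>r. 0 < r \<and> r < r0 \<longrightarrow> cball a r \<subseteq> \<Omega> \<and>
        (\<forall>\<phi>. continuous_on (sphere a r) \<phi> \<and> (\<forall>z\<in>sphere a r. u z \<le> ereal (\<phi> z))
              \<longrightarrow> u a \<le> ereal (circle_mean \<phi> a r)))"

definition thin_at :: "complex set \<Rightarrow> complex \<Rightarrow> bool" where
  "thin_at A a \<longleftrightarrow>
     a \<notin> closure (A - {a}) \<or>
     (\<exists>\<Omega> u. open \<Omega> \<and> a \<in> \<Omega> \<and> subharmonic_on \<Omega> u \<and>
            Limsup (at a within (A - {a})) u < u a)"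

definition rel_extremal :: "complex set \<Rightarrow> complex set \<Rightarrow> complex \<Rightarrow> ereal" where
  "rel_extremal A \<Omega> z = Sup {u z | u. subharmonic_on \<Omega> u \<and> (\<forall>w\<in>\<Omega>. u w \<le> 1) \<and> (\<forall>w\<in>A. u w \<le> 0)}"

definition usc_reg :: "complex set \<Rightarrow> (complex \<Rightarrow> ereal) \<Rightarrow> complex \<Rightarrow> ereal" where
  "usc_reg \<Omega> f z = max (f z) (Limsup (at z within \<Omega>) f)"

definition rel_extremal_star :: "complex set \<Rightarrow> complex set \<Rightarrow> complex \<Rightarrow> ereal" where
  "rel_extremal_star A \<Omega> = usc_reg \<Omega> (rel_extremal A \<Omega>)"

definition locally_regular :: "complex set \<Rightarrow> bool" where
  "locally_regular A \<longleftrightarrow>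
     (\<forall>a\<in>A. \<forall>\<Omega>. open \<Omega> \<and> a \<in> \<Omega> \<longrightarrow> rel_extremal_star (A \<inter> \<Omega>) \<Omega> a = 0)"

end

theory Submission
  imports Defs "HOL-Complex_Analysis.Contour_Integration"
begin
lemma cis_3pi2: "cis (3*pi/2) = -\<i>"
proof -
  have e: "3*pi/2 = pi/2 + pi" by simp
  have c: "cos (3*pi/2) = 0"
  proof -
    have "cos (3*pi/2) = cos (pi/2 + pi)" by (simp only: e)
    also have "\<dots> = 0" by (simp only: cos_add cos_pi_half sin_pi_half cos_pi sin_pi)
    finally show ?thesis .
  qed
  have s: "sin (3*pi/2) = -1"
  proof -
    have "sin (3*pi/2) = sin (pi/2 + pi)" by (simp only: e)
    also have "\<dots> = -1" by (simp only: sin_add cos_pi_half sin_pi_half cos_pi sin_pi)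
    finally show ?thesis .
  qed
  show ?thesis using c s by (simp add: complex_eq_iff)
qed

lemma dist_half_vert: "Re w = 1/2 \<Longrightarrow> dist (1/2::complex) w = \<bar>Im w\<bar>"
proof -
  assume "Re w = 1/2"
  then have "Re (1/2 - w) = 0" by simp
  then show ?thesis by (simp only: dist_norm cmod_def) simp
qed

lemma sphere_sub_halves:
  assumes "w \<in> sphere (1/2::complex) 3"
  shows "w \<in> (\<lambda>x. 1/2 + complex_of_real 3 * cis x) ` {pi/2..3*pi/2} \<union>
             (\<lambda>x. 1/2 + complex_of_real 3 * cis x) ` {-pi/2..pi/2}"
proof -
  define v where "v = (w - 1/2) / 3"
  have nv: "cmod v = 1" using assms by (simp add: v_def dist_norm norm_divide norm_minus_commute)
  have w: "w = 1/2 + 3 * v" by (simp add: v_def field_simps)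
  have sq: "(Re v)^2 + (Im v)^2 = 1" using nv by (simp add: cmod_def)
  have b: "-1 \<le> Im v" "Im v \<le> 1" using abs_Im_le_cmod[of v] nv by auto
  have r: "sqrt (1 - (Im v)^2) = \<bar>Re v\<bar>" using sq by (metis add_diff_cancel_right' real_sqrt_abs)
  show ?thesis
  proof (cases "0 \<le> Re v")
    case True
    define x where "x = arcsin (Im v)"
    have "cis x = v" using True b r by (simp add: complex_eq_iff x_def cos_arcsin sin_arcsin)
    moreover have "x \<in> {-pi/2..pi/2}" using arcsin_bounded[OF b] by (simp add: x_def)
    ultimately show ?thesis using w by (intro UnI2 image_eqI[where x=x]) auto
  next
    case False
    define x where "x = pi - arcsin (Im v)"
    have "cis x = v" using False b r by (simp add: complex_eq_iff x_def cos_arcsin sin_arcsin cos_diff sin_diff)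
    moreover have "x \<in> {pi/2..3*pi/2}" using arcsin_bounded[OF b] by (simp add: x_def)
    ultimately show ?thesis using w by (intro UnI1 image_eqI[where x=x]) auto
  qed
qed

lemma ray_not_inside:
  fixes S :: "complex set"
  assumes "\<And>s. s \<ge> 0 \<Longrightarrow> z + of_real s * d \<notin> S" "d \<noteq> 0"
  shows "z \<notin> inside S"
proof
  assume z: "z \<in> inside S"
  define R where "R = (\<lambda>s. z + of_real s * d) ` {0..}"
  have "connected R" unfolding R_def
    by (intro connected_continuous_image continuous_intros) (auto simp: is_interval_connected is_interval_ci)
  moreover have "R \<subseteq> - S" using assms by (auto simp: R_def)
  moreover have "z \<in> R" by (force simp: R_def)
  ultimately have sub: "R \<subseteq> connected_component_set (- S) z" by (rule connected_component_maximal[rotated])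
  have "bounded (connected_component_set (- S) z)" using z by (simp add: inside_def)
  then have "bounded R" using sub bounded_subset by blast
  then obtain B where B: "\<And>x. x \<in> R \<Longrightarrow> norm x \<le> B" by (auto simp: bounded_iff)
  define s where "s = (\<bar>B\<bar> + norm z + 1) / norm d"
  have "s \<ge> 0" by (simp add: s_def)
  then have "z + of_real s * d \<in> R" by (auto simp: R_def)
  then have "norm (z + of_real s * d) \<le> B" by (rule B)
  moreover have "norm (of_real s * d) = s * norm d"
    using \<open>s \<ge> 0\<close> by (simp add: norm_mult)
  moreover have "s * norm d = \<bar>B\<bar> + norm z + 1"
    using assms(2) by (simp add: s_def)
  moreover have "norm (of_real s * d) \<le> norm (z + of_real s * d) + norm z"
    by (metis add.commute add_diff_cancel_right' norm_triangle_ineq4)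
  ultimately show False by linarith
qed

lemma sep_lemma:
  fixes L :: "complex set"
  assumes cL: "compact L" and conL: "connected L" and L0: "0 \<in> L" and L1: "1 \<in> L" and Lb: "L \<subseteq> cball 0 1"
  shows "\<not> connected ({w. 1/3 < Re w \<and> Re w < 2/3} \<inter> ball (1/2) 3 - L)"
proof
  define V0 where "V0 = {w::complex. 1/3 < Re w \<and> Re w < 2/3} \<inter> ball (1/2) 3"
  assume conn: "connected ({w. 1/3 < Re w \<and> Re w < 2/3} \<inter> ball (1/2) 3 - L)"
  then have conn': "connected (V0 - L)" by (simp add: V0_def)
  have "open {w::complex. 1/3 < Re w \<and> Re w < 2/3}"
    by (intro open_Collect_conj open_Collect_less continuous_intros)
  then have oV0: "open V0" by (simp add: V0_def open_Int)
  have opn: "open (V0 - L)" using oV0 cL by (simp add: open_Diff compact_imp_closed)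
  have Lim: "\<bar>Im z\<bar> \<le> 1" if "z \<in> L" for z
    using Lb that abs_Im_le_cmod[of z] by (auto simp: dist_norm)
  have Lre: "\<bar>Re z\<bar> \<le> 1" if "z \<in> L" for z
    using Lb that abs_Re_le_cmod[of z] by (auto simp: dist_norm)
  define Tm where "Tm = Complex (1/2) 3"
  define Bm where "Bm = Complex (1/2) (-3)"
  define t where "t = Complex (1/2) (5/2)"
  define b where "b = Complex (1/2) (-5/2)"
  have vert: "w \<in> V0 - L" if "Re w = 1/2" "1 < \<bar>Im w\<bar>" "\<bar>Im w\<bar> < 3" for w
    using that Lim dist_half_vert[of w] by (force simp: V0_def)
  have tV: "t \<in> V0 - L" by (rule vert) (auto simp: t_def)
  have bV: "b \<in> V0 - L" by (rule vert) (auto simp: b_def)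
  have "path_connected (V0 - L)" using opn conn' by (simp add: connected_open_path_connected)
  then have "path_component (V0 - L) t b" using tV bV by (simp add: path_connected_component)
  then obtain g0 where g0: "path g0" "path_image g0 \<subseteq> V0 - L" "pathstart g0 = t" "pathfinish g0 = b"
    by (auto simp: path_component_def)
  define g1 where "g1 = linepath Tm t +++ g0 +++ linepath b Bm"
  have pg1: "path g1" "pathstart g1 = Tm" "pathfinish g1 = Bm"
    using g0 by (auto simp: g1_def)
  have seg1: "closed_segment Tm t \<subseteq> (V0 - L) \<union> {Tm}"
  proof
    fix w assume "w \<in> closed_segment Tm t"
    then obtain u where u: "0 \<le> u" "u \<le> 1" "w = (1 - u) *\<^sub>R Tm + u *\<^sub>R t"
      by (auto simp: closed_segment_def)
    show "w \<in> (V0 - L) \<union> {Tm}"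
    proof (cases "u = 0")
      case True then show ?thesis using u by simp
    next
      case False
      have "Re w = 1/2" "Im w = 3 - u/2" unfolding u(3) by (simp_all add: Tm_def t_def field_simps)
      then have "w \<in> V0 - L" using u False by (intro vert) auto
      then show ?thesis by simp
    qed
  qed
  have seg2: "closed_segment b Bm \<subseteq> (V0 - L) \<union> {Bm}"
  proof
    fix w assume "w \<in> closed_segment b Bm"
    then obtain u where u: "0 \<le> u" "u \<le> 1" "w = (1 - u) *\<^sub>R b + u *\<^sub>R Bm"
      by (auto simp: closed_segment_def)
    show "w \<in> (V0 - L) \<union> {Bm}"
    proof (cases "u = 1")
      case True then show ?thesis using u by simp
    next
      case False
      have "Re w = 1/2" "Im w = -5/2 - u/2" unfolding u(3) by (simp_all add: Bm_def b_def field_simps)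
      then have "w \<in> V0 - L" using u False by (intro vert) auto
      then show ?thesis by simp
    qed
  qed
  have img1: "path_image g1 \<subseteq> (V0 - L) \<union> {Tm, Bm}"
    using seg1 seg2 g0 by (auto simp: g1_def path_image_join)
  have "Tm \<noteq> Bm" by (simp add: Tm_def Bm_def)
  then obtain c where c: "arc c" "path_image c \<subseteq> path_image g1" "pathstart c = Tm" "pathfinish c = Bm"
    using path_contains_arc[OF pg1] by blast
  have cimg: "path_image c \<subseteq> (V0 - L) \<union> {Tm, Bm}" using c img1 by blast
  define c1 where "c1 = part_circlepath (1/2) 3 (pi/2) (3*pi/2)"
  define c2 where "c2 = part_circlepath (1/2) 3 (pi/2) (-pi/2)"
  have cisi: "cis (pi/2) = \<i>" "cis (-pi/2) = -\<i>" by (simp_all add: complex_eq_iff)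
  have exi: "exp (\<i> * complex_of_real x) = cis x" for x by (simp add: cis_conv_exp)
  have c1se: "pathstart c1 = Tm" "pathfinish c1 = Bm"
    by (simp_all only: c1_def pathstart_part_circlepath pathfinish_part_circlepath exi cisi cis_3pi2)
       (simp_all add: Tm_def Bm_def complex_eq_iff)
  have c2se: "pathstart c2 = Tm" "pathfinish c2 = Bm"
    by (simp_all only: c2_def pathstart_part_circlepath pathfinish_part_circlepath exi cisi)
       (simp_all add: Tm_def Bm_def complex_eq_iff)
  have spc1: "simple_path c1" by (simp add: c1_def simple_path_part_circlepath)
  have spc2: "simple_path c2" by (simp add: c2_def simple_path_part_circlepath)
  have im1: "path_image c1 = (\<lambda>x. 1/2 + complex_of_real 3 * cis x) ` {pi/2..3*pi/2}"
    by (simp add: c1_def path_image_part_circlepath' closed_segment_eq_real_ivl)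
  have im2: "path_image c2 = (\<lambda>x. 1/2 + complex_of_real 3 * cis x) ` {-pi/2..pi/2}"
    by (simp add: c2_def path_image_part_circlepath' closed_segment_eq_real_ivl pi_gt_zero not_le)
  have c1re: "Re w \<le> 1/2" if wc: "w \<in> path_image c1" for w
  proof -
    obtain x where x: "x \<in> {pi/2..3*pi/2}" "w = 1/2 + complex_of_real 3 * cis x" using wc[unfolded im1] by blast
    have "0 \<le> cos (x - pi)" using x by (intro cos_ge_zero) auto
    then have "cos x \<le> 0" by (simp add: cos_diff)
    then show ?thesis using x by simp
  qed
  have c2re: "Re w \<ge> 1/2" if wc: "w \<in> path_image c2" for w
  proof -
    obtain x where x: "x \<in> {-pi/2..pi/2}" "w = 1/2 + complex_of_real 3 * cis x" using wc[unfolded im2] by blast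
    have "0 \<le> cos x" using x by (intro cos_ge_zero) auto
    then show ?thesis using x by simp
  qed
  have c12s: "path_image c1 \<union> path_image c2 = sphere (1/2) 3"
  proof
    show "path_image c1 \<union> path_image c2 \<subseteq> sphere (1/2) 3"
      using path_image_part_circlepath_subset'[of 3 "1/2"] by (auto simp: c1_def c2_def)
    show "sphere (1/2) 3 \<subseteq> path_image c1 \<union> path_image c2"
      using sphere_sub_halves im1 im2 by blast
  qed
  have sph2: "w = Tm \<or> w = Bm" if "w \<in> sphere (1/2) 3" "Re w = 1/2" for w
  proof -
    have "\<bar>Im w\<bar> = 3" using that dist_half_vert[of w] by simp
    then show ?thesis using that by (auto simp: Tm_def Bm_def complex_eq_iff abs_if split: if_splits)
  qed
  have V0b: "V0 \<subseteq> ball (1/2) 3" by (simp add: V0_def)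
  have Tmc: "Tm \<in> path_image c" "Bm \<in> path_image c" using c
    by (metis pathstart_in_path_image pathfinish_in_path_image)+
  have cs: "path_image c \<inter> sphere (1/2) 3 \<subseteq> {Tm, Bm}" using cimg V0b by auto
  have c1c2: "path_image c1 \<inter> path_image c2 = {Tm, Bm}"
  proof
    show "path_image c1 \<inter> path_image c2 \<subseteq> {Tm, Bm}"
    proof
      fix w assume w: "w \<in> path_image c1 \<inter> path_image c2"
      then have "Re w = 1/2" using c1re c2re by (meson IntD1 IntD2 antisym)
      moreover have "w \<in> sphere (1/2) 3" using w c12s by blast
      ultimately show "w \<in> {Tm, Bm}" using sph2 by blast
    qed
    show "{Tm, Bm} \<subseteq> path_image c1 \<inter> path_image c2"
      using c1se c2se pathfinish_in_path_image[of c1] pathstart_in_path_image[of c1]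
        pathfinish_in_path_image[of c2] pathstart_in_path_image[of c2] by auto
  qed
  have c1c: "path_image c1 \<inter> path_image c = {Tm, Bm}"
  proof
    show "path_image c1 \<inter> path_image c \<subseteq> {Tm, Bm}" using cs c12s by blast
    show "{Tm, Bm} \<subseteq> path_image c1 \<inter> path_image c"
      using c1se Tmc pathfinish_in_path_image[of c1] pathstart_in_path_image[of c1] by auto
  qed
  have c2c: "path_image c2 \<inter> path_image c = {Tm, Bm}"
  proof
    show "path_image c2 \<inter> path_image c \<subseteq> {Tm, Bm}" using cs c12s by blast
    show "{Tm, Bm} \<subseteq> path_image c2 \<inter> path_image c"
      using c2se Tmc pathfinish_in_path_image[of c2] pathstart_in_path_image[of c2] by auto
  qed
  have ins: "inside (path_image c1 \<union> path_image c2) = ball (1/2) 3"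
    using inside_frontier_eq_interior[of "cball (1/2::complex) 3"] c12s by simp
  have "c (1/2) \<in> path_image c" by (simp add: path_image_def)
  moreover have "c (1/2) \<noteq> Tm" "c (1/2) \<noteq> Bm"
  proof -
    have inj: "inj_on c {0..1}" using c(1) by (simp add: arc_def)
    have "c (1/2) \<noteq> c 0"
    proof
      assume "c (1/2) = c 0"
      then have "(1/2::real) = 0" by (rule inj_onD[OF inj]) auto
      then show False by simp
    qed
    moreover have "c (1/2) \<noteq> c 1"
    proof
      assume "c (1/2) = c 1"
      then have "(1/2::real) = 1" by (rule inj_onD[OF inj]) auto
      then show False by simp
    qed
    ultimately show "c (1/2) \<noteq> Tm" "c (1/2) \<noteq> Bm" using c(3,4) by (auto simp: pathstart_def pathfinish_def)
  qed
  ultimately have "c (1/2) \<in> V0" using cimg by blast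
  then have ne12: "path_image c \<inter> inside (path_image c1 \<union> path_image c2) \<noteq> {}"
    using ins V0b \<open>c (1/2) \<in> path_image c\<close> by blast
  have spc: "simple_path c" using c(1) by (rule arc_imp_simple_path)
  obtain disj: "inside (path_image c1 \<union> path_image c) \<inter> inside (path_image c2 \<union> path_image c) = {}"
    and un: "inside (path_image c1 \<union> path_image c) \<union> inside (path_image c2 \<union> path_image c) \<union>
           (path_image c - {Tm, Bm}) = inside (path_image c1 \<union> path_image c2)"
    by (rule split_inside_simple_closed_curve[OF spc1 c1se spc2 c2se spc c(3,4) \<open>Tm \<noteq> Bm\<close> c1c2 c1c c2c ne12])
  define I1 where "I1 = inside (path_image c1 \<union> path_image c)"
  define I2 where "I2 = inside (path_image c2 \<union> path_image c)"
  have oI1: "open I1" unfolding I1_def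
    using spc1 spc by (intro open_inside closed_Un closed_path_image) (auto simp: simple_path_imp_path)
  have oI2: "open I2" unfolding I2_def
    using spc2 spc by (intro open_inside closed_Un closed_path_image) (auto simp: simple_path_imp_path)
  have Lball: "L \<subseteq> ball (1/2) 3"
  proof
    fix z assume "z \<in> L"
    then have "norm z \<le> 1" using Lb by auto
    then have "dist (1/2) z \<le> 1/2 + 1" using norm_triangle_ineq4[of "1/2" z] by (simp add: dist_norm)
    then show "z \<in> ball (1/2) 3" by simp
  qed
  have Lc: "L \<inter> path_image c = {}"
  proof -
    have "Tm \<notin> L" "Bm \<notin> L" using Lim by (force simp: Tm_def Bm_def)+
    then show ?thesis using cimg by blast
  qed
  have LI: "L \<subseteq> I1 \<union> I2" using un ins Lball Lc by (auto simp: I1_def I2_def)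
  have n1: "1 \<notin> I1" unfolding I1_def
  proof (rule ray_not_inside[where d=1])
    fix s :: real assume "0 \<le> s"
    then have r: "Re (1 + of_real s * 1) \<ge> 1" by simp
    show "1 + of_real s * 1 \<notin> path_image c1 \<union> path_image c"
    proof
      assume "1 + of_real s * 1 \<in> path_image c1 \<union> path_image c"
      then show False
      proof
        assume "1 + of_real s * 1 \<in> path_image c1" then show False using c1re r by fastforce
      next
        assume "1 + of_real s * 1 \<in> path_image c"
        then have "1 + of_real s * 1 \<in> (V0 - L) \<union> {Tm, Bm}" using cimg by blast
        then show False using r by (auto simp: V0_def Tm_def Bm_def complex_eq_iff)
      qed
    qed
  qed simp
  have n0: "0 \<notin> I2" unfolding I2_def
  proof (rule ray_not_inside[where d="-1"])
    fix s :: real assume "0 \<le> s"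
    then have r: "Re (0 + of_real s * -1) \<le> 0" by simp
    show "0 + of_real s * -1 \<notin> path_image c2 \<union> path_image c"
    proof
      assume "0 + of_real s * -1 \<in> path_image c2 \<union> path_image c"
      then show False
      proof
        assume "0 + of_real s * -1 \<in> path_image c2" then show False using c2re r by fastforce
      next
        assume "0 + of_real s * -1 \<in> path_image c"
        then have "0 + of_real s * -1 \<in> (V0 - L) \<union> {Tm, Bm}" using cimg by blast
        then show False using r by (auto simp: V0_def Tm_def Bm_def complex_eq_iff)
      qed
    qed
  qed simp
  have "0 \<in> I1" using LI L0 n0 by blast
  moreover have "1 \<in> I2" using LI L1 n1 by blast
  ultimately show False
    using conL oI1 oI2 LI disj L0 L1 unfolding connected_def I1_def I2_def by blast
qed

lemma sh_open: "subharmonic_on \<Omega> u \<Longrightarrow> open \<Omega>"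
  by (simp add: subharmonic_on_def)

lemma usc_lt:
  assumes sh: "subharmonic_on \<Omega> u" and z: "z \<in> \<Omega>" and lt: "u z < c"
  shows "\<exists>e>0. \<forall>w\<in>ball z e. u w < c"
proof -
  have "Limsup (at z) u \<le> u z" using sh z by (simp add: subharmonic_on_def)
  then have "Limsup (at z) u < c" using lt by simp
  then have "eventually (\<lambda>x. u x < c) (at z)" by (rule Limsup_lessD)
  then obtain d where d: "d > 0" "\<And>x. x \<noteq> z \<Longrightarrow> dist x z < d \<Longrightarrow> u x < c"
    by (auto simp: eventually_at)
  show ?thesis
  proof (intro exI conjI ballI)
    fix w assume "w \<in> ball z d"
    then show "u w < c" using d lt by (cases "w = z") (auto simp: dist_commute)
  qed (use d in auto)
qed

lemma usc_compact:
  assumes sh: "subharmonic_on \<Omega> u" and K: "compact K" "K \<subseteq> \<Omega>"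
  shows "compact {z\<in>K. c \<le> u z}"
proof -
  define Ob where "Ob = \<Union>{B. open B \<and> (\<forall>w\<in>B. u w < c)}"
  have oO: "open Ob" by (auto simp: Ob_def)
  have "{z\<in>K. c \<le> u z} = K \<inter> - Ob"
  proof (intro set_eqI iffI)
    fix z assume z: "z \<in> {z\<in>K. c \<le> u z}"
    then show "z \<in> K \<inter> - Ob" by (auto simp: Ob_def not_less[symmetric])
  next
    fix z assume z: "z \<in> K \<inter> - Ob"
    show "z \<in> {z\<in>K. c \<le> u z}"
    proof (rule ccontr)
      assume "z \<notin> {z\<in>K. c \<le> u z}"
      then have "u z < c" using z by (auto simp: not_le)
      then obtain e where "e > 0" "\<forall>w\<in>ball z e. u w < c" using usc_lt[OF sh] z K by blast
      then have "z \<in> Ob" unfolding Ob_def using \<open>e > 0\<close> by (intro UnionI[of "ball z e"]) auto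
      then show False using z by blast
    qed
  qed
  then show ?thesis using K oO by (simp add: compact_Int_closed closed_Compl)
qed

lemma usc_max:
  assumes sh: "subharmonic_on \<Omega> u" and K: "compact K" "K \<subseteq> \<Omega>" "K \<noteq> {}"
  shows "\<exists>z\<in>K. \<forall>w\<in>K. u w \<le> u z"
proof -
  define M where "M = Sup (u ` K)"
  have "K \<inter> (\<Inter>c\<in>{c. c < M}. {z\<in>K. c \<le> u z}) \<noteq> {}"
  proof (rule compact_imp_fip_image[OF K(1)])
    fix c assume "c \<in> {c. c < M}"
    show "closed {z\<in>K. c \<le> u z}" using usc_compact[OF sh K(1,2)] by (rule compact_imp_closed)
  next
    fix C assume C: "finite C" "C \<subseteq> {c. c < M}"
    show "K \<inter> (\<Inter>c\<in>C. {z\<in>K. c \<le> u z}) \<noteq> {}"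
    proof (cases "C = {}")
      case True then show ?thesis using K by simp
    next
      case False
      have "Max C < M" using C False by (auto simp: subset_eq)
      then obtain x where "x \<in> u ` K" "Max C < x" unfolding M_def using less_Sup_iff by blast
      then obtain z where z: "z \<in> K" "Max C < u z" by blast
      have "c \<le> u z" if "c \<in> C" for c using that C False z by (auto intro: less_imp_le)
      then show ?thesis using z by blast
    qed
  qed
  then obtain z where z0: "z \<in> K \<inter> (\<Inter>c\<in>{c. c < M}. {z\<in>K. c \<le> u z})" by blast
  then have z: "z \<in> K" "\<And>c. c < M \<Longrightarrow> c \<le> u z" by auto
  have Mz: "M \<le> u z" by (rule dense_le) (rule z(2))
  have "\<forall>w\<in>K. u w \<le> M" by (simp add: M_def SUP_upper)
  then show ?thesis using z(1) Mz order_trans by blast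
qed

lemma wire:
  fixes Q :: "complex set"
  assumes cQ: "compact Q" and xQ: "x \<in> Q" and R: "0 < R"
    and no: "\<And>U. compact U \<Longrightarrow> x \<in> U \<Longrightarrow> U \<subseteq> Q \<inter> ball x R \<Longrightarrow> compact (Q \<inter> cball x R - U) \<Longrightarrow> False"
  shows "\<exists>C. connected C \<and> C \<subseteq> Q \<inter> cball x R \<and> x \<in> C \<and> C \<inter> sphere x R \<noteq> {}"
proof (rule ccontr)
  assume nC: "\<not> ?thesis"
  define X where "X = top_of_set (Q \<inter> cball x R)"
  have cK: "compact (Q \<inter> cball x R)" using cQ by (simp add: compact_Int_closed)
  have "compact_space X" unfolding X_def using cK by (simp add: compact_space_subtopology)
  moreover have "Hausdorff_space X" unfolding X_def by (simp add: Hausdorff_space_subtopology)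
  moreover have "closedin X {x}" unfolding X_def
    using xQ R by (intro closed_subset) auto
  moreover have "closedin X (Q \<inter> sphere x R)" unfolding X_def
    using cQ by (intro closed_subset) (auto simp: compact_imp_closed closed_Int)
  moreover have "disjnt C {x} \<or> disjnt C (Q \<inter> sphere x R)" if cC: "connectedin X C" for C
  proof (rule ccontr)
    assume a: "\<not> (disjnt C {x} \<or> disjnt C (Q \<inter> sphere x R))"
    have c1: "connected C" "C \<subseteq> Q \<inter> cball x R" using cC by (simp_all add: X_def connectedin_subtopology)
    have "x \<in> C" using a by (simp add: disjnt_def)
    moreover have "C \<inter> sphere x R \<noteq> {}" using a by (auto simp: disjnt_def)
    ultimately show False using nC c1 by blast
  qed
  ultimately have "separated_between X {x} (Q \<inter> sphere x R)"
    by (rule cut_wire_fence_theorem)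
  then obtain U V where UV: "openin X U" "openin X V" "U \<union> V = topspace X" "disjnt U V"
      "{x} \<subseteq> U" "Q \<inter> sphere x R \<subseteq> V"
    unfolding separated_between_def by blast
  have top: "topspace X = Q \<inter> cball x R" by (simp add: X_def)
  have Ueq: "U = topspace X - V" using UV by (auto simp: disjnt_def)
  have Veq: "V = topspace X - U" using UV by (auto simp: disjnt_def)
  have "closedin X U" unfolding Ueq using UV(2) openin_closedin_eq by blast
  then have cU: "compact U" using cK by (metis X_def closedin_compact)
  have "closedin X V" unfolding Veq using UV(1) openin_closedin_eq by blast
  then have cV: "compact V" using cK by (metis X_def closedin_compact)
  have QV: "Q \<inter> cball x R - U = V" using Veq top by simp
  have Usub: "U \<subseteq> Q \<inter> ball x R"
  proof
    fix y assume y: "y \<in> U"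
    then have "y \<in> Q \<inter> cball x R" using UV top by blast
    moreover have "y \<notin> sphere x R"
    proof
      assume "y \<in> sphere x R"
      then have "y \<in> V" using \<open>y \<in> Q \<inter> cball x R\<close> UV(6) by blast
      then show False using y UV(4) by (auto simp: disjnt_def)
    qed
    ultimately show "y \<in> Q \<inter> ball x R" by (simp add: less_le)
  qed
  have xU: "x \<in> U" using UV(5) by simp
  show False using no[OF cU xU Usub] cV QV by simp
qed

lemma G_facts:
  fixes t :: real
  shows "max 0 (2 * cos t - 1) \<ge> 0" "max 0 (2 * cos t - 1) \<le> 1"
  using cos_le_one[of t] by auto

lemma integral_G_pos: "integral {0..2*pi} (\<lambda>t. max 0 (2 * cos t - 1)) > 0"
proof -
  have cont: "continuous_on {0..2*pi} (\<lambda>t. max 0 (2 * cos t - 1))"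
    by (intro continuous_intros)
  have nn: "\<And>t. t \<in> {0..2*pi} \<Longrightarrow> max 0 (2 * cos t - 1) \<ge> 0" by simp
  have "integral {0..2*pi} (\<lambda>t. max 0 (2 * cos t - 1)) \<ge> 0"
    using cont nn by (intro integral_nonneg integrable_continuous_real) auto
  moreover have "integral {0..2*pi} (\<lambda>t. max 0 (2 * cos t - 1)) \<noteq> 0"
  proof
    assume "integral {0..2*pi} (\<lambda>t. max 0 (2 * cos t - 1)) = 0"
    then have "\<forall>x\<in>{0..2*pi}. max 0 (2 * cos x - 1) = 0"
      using integral_eq_0_iff[OF cont _ nn] by simp
    moreover have "(0::real) \<in> {0..2*pi}" by simp
    ultimately have "max 0 (2 * cos 0 - 1) = (0::real)" by blast
    then show False by simp
  qed
  ultimately show ?thesis by linarith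
qed

lemma max_principle:
  assumes sh: "subharmonic_on \<Omega> u" and oW: "open W" and bW: "bounded W" and cW: "closure W \<subseteq> \<Omega>"
    and fr: "\<And>z. z \<in> frontier W \<Longrightarrow> u z < c" and y: "y \<in> W"
  shows "u y < c"
proof (rule ccontr)
  assume "\<not> u y < c"
  then have cy: "c \<le> u y" by simp
  define K where "K = closure W"
  have cK: "compact K" using bW by (simp add: K_def compact_closure)
  have KO: "K \<subseteq> \<Omega>" using cW by (simp add: K_def)
  have WK: "W \<subseteq> K" by (simp add: K_def closure_subset)
  have Kne: "K \<noteq> {}" using y WK by blast
  obtain z1 where z1: "z1 \<in> K" "\<And>w. w \<in> K \<Longrightarrow> u w \<le> u z1" using usc_max[OF sh cK KO Kne] by blast
  define M where "M = u z1"
  have "W \<noteq> UNIV" using bW not_bounded_UNIV by blast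
  then have "frontier W \<noteq> {}" using y frontier_not_empty by blast
  then obtain zf where zf: "zf \<in> frontier W" by blast
  have zfK: "zf \<in> K" using zf by (simp add: K_def frontier_def)
  have "u zf < c" using fr zf by blast
  moreover have "c \<le> M" using cy z1 y WK M_def by (meson order_trans subsetD)
  ultimately have "u zf < M" by simp
  then have Mninf: "M \<noteq> -\<infinity>" by auto
  have "M < \<infinity>" using sh z1(1) KO by (auto simp: subharmonic_on_def M_def)
  then obtain m where m: "M = ereal m" using Mninf by (cases M) auto
  define Z where "Z = {z\<in>K. M \<le> u z}"
  have cZ: "compact Z" unfolding Z_def by (rule usc_compact[OF sh cK KO])
  have Zne: "Z \<noteq> {}" using z1 by (auto simp: Z_def M_def)
  have ZW: "Z \<subseteq> W"
  proof
    fix z assume z: "z \<in> Z"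
    then have "z \<in> K" "M \<le> u z" by (auto simp: Z_def)
    show "z \<in> W"
    proof (rule ccontr)
      assume "z \<notin> W"
      then have "z \<in> frontier W" using \<open>z \<in> K\<close> oW by (simp add: K_def frontier_def interior_open)
      then have "u z < c" by (rule fr)
      then show False using \<open>M \<le> u z\<close> \<open>c \<le> M\<close> by simp
    qed
  qed
  obtain z0 where z0: "z0 \<in> Z" "\<And>z. z \<in> Z \<Longrightarrow> Re z \<le> Re z0"
    using continuous_attains_sup[OF cZ Zne linear_continuous_on[OF bounded_linear_Re]] by blast
  have z0W: "z0 \<in> W" using z0 ZW by blast
  have uz0: "u z0 = M" using z0(1) z1(2) by (auto simp: Z_def M_def intro: antisym)
  have z0O: "z0 \<in> \<Omega>" using z0W WK KO by blast
  have "\<forall>a\<in>\<Omega>. \<exists>r0>0. \<forall>r. 0 < r \<and> r < r0 \<longrightarrow> cball a r \<subseteq> \<Omega> \<and>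
        (\<forall>\<phi>. continuous_on (sphere a r) \<phi> \<and> (\<forall>z\<in>sphere a r. u z \<le> ereal (\<phi> z))
              \<longrightarrow> u a \<le> ereal (circle_mean \<phi> a r))"
    using sh unfolding subharmonic_on_def by (elim conjE)
  from bspec[OF this z0O] obtain r0 where r0: "r0 > 0" "\<forall>r. 0 < r \<and> r < r0 \<longrightarrow> cball z0 r \<subseteq> \<Omega> \<and>
        (\<forall>\<phi>. continuous_on (sphere z0 r) \<phi> \<and> (\<forall>z\<in>sphere z0 r. u z \<le> ereal (\<phi> z))
              \<longrightarrow> u z0 \<le> ereal (circle_mean \<phi> z0 r))"
    by (elim exE conjE) (rule that)
  obtain e where e: "e > 0" "ball z0 e \<subseteq> W" using oW z0W open_contains_ball by blast
  define r where "r = min (r0/2) (e/2)"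
  have r: "0 < r" "r < r0" "r < e" using r0 e by (auto simp: r_def)
  have "cball z0 r \<subseteq> ball z0 e" using r by (simp add: cball_subset_ball_iff)
  then have cbW: "cball z0 r \<subseteq> W" using e(2) by blast
  define \<Gamma> where "\<Gamma> = sphere z0 r \<inter> {w. Re z0 + r/2 \<le> Re w}"
  have "closed {w. Re z0 + r/2 \<le> Re w}" by (intro closed_Collect_le continuous_intros)
  then have cG: "compact \<Gamma>" unfolding \<Gamma>_def by (intro compact_Int_closed compact_sphere)
  have zr: "z0 + of_real r \<in> \<Gamma>" using r by (simp add: \<Gamma>_def dist_norm)
  have GW: "\<Gamma> \<subseteq> W" using cbW by (auto simp: \<Gamma>_def)
  obtain zg where zg: "zg \<in> \<Gamma>" "\<And>w. w \<in> \<Gamma> \<Longrightarrow> u w \<le> u zg"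
    using usc_max[OF sh cG] GW WK KO zr by blast
  have "u zg < M"
  proof (rule ccontr)
    assume "\<not> u zg < M"
    then have "zg \<in> Z" using zg GW WK by (auto simp: Z_def not_less)
    then have "Re zg \<le> Re z0" by (rule z0(2))
    then show False using zg(1) r by (auto simp: \<Gamma>_def)
  qed
  then obtain d where d: "d < m" "u zg \<le> ereal d"
  proof (cases "u zg")
    case (real d0) then show ?thesis using that \<open>u zg < M\<close> m by auto
  next
    case PInf then show ?thesis using \<open>u zg < M\<close> by simp
  next
    case MInf then show ?thesis using that[of "m - 1"] by simp
  qed
  define \<phi> where "\<phi> = (\<lambda>z. m - (m - d) * max 0 ((Re (z - z0) - r/2) / (r/2)))"
  have cphi: "continuous_on (sphere z0 r) \<phi>" unfolding \<phi>_def using r by (intro continuous_intros) auto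
  have maj: "u w \<le> ereal (\<phi> w)" if w: "w \<in> sphere z0 r" for w
  proof (cases "w \<in> \<Gamma>")
    case True
    have "Re (w - z0) \<le> r" using w abs_Re_le_cmod[of "w - z0"] by (auto simp: dist_norm norm_minus_commute)
    then have "(Re (w - z0) - r/2) / (r/2) \<le> 1" using r by (simp add: divide_le_eq_1)
    then have "max 0 ((Re (w - z0) - r/2) / (r/2)) \<le> 1" by simp
    then have "(m - d) * max 0 ((Re (w - z0) - r/2) / (r/2)) \<le> (m - d)" using d by (simp add: mult_left_le)
    then have dphi: "d \<le> \<phi> w" by (simp add: \<phi>_def)
    have "u w \<le> u zg" by (rule zg(2)[OF True])
    also have "\<dots> \<le> ereal d" by (rule d(2))
    also have "\<dots> \<le> ereal (\<phi> w)" using dphi by simp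
    finally show ?thesis .
  next
    case False
    then have "Re w < Re z0 + r/2" using w by (auto simp: \<Gamma>_def)
    then have "Re (w - z0) - r/2 \<le> 0" by simp
    then have "(Re (w - z0) - r/2) / (r/2) \<le> 0" using r by (simp add: divide_nonpos_pos)
    then have "max 0 ((Re (w - z0) - r/2) / (r/2)) = 0" by simp
    then have "\<phi> w = m" by (simp add: \<phi>_def)
    moreover have "w \<in> K" using w cbW WK sphere_cball by blast
    then have "u w \<le> M" using z1(2) by (simp add: M_def)
    ultimately show ?thesis using m by simp
  qed
  have H: "\<forall>\<phi>. continuous_on (sphere z0 r) \<phi> \<and> (\<forall>z\<in>sphere z0 r. u z \<le> ereal (\<phi> z))
              \<longrightarrow> u z0 \<le> ereal (circle_mean \<phi> z0 r)" using mp[OF spec[OF r0(2), of r] conjI[OF r(1,2)]] by (rule conjunct2)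
  have majb: "\<forall>z\<in>sphere z0 r. u z \<le> ereal (\<phi> z)" using maj by blast
  have "u z0 \<le> ereal (circle_mean \<phi> z0 r)" using spec[OF H, of \<phi>] cphi majb by blast
  then have le: "m \<le> circle_mean \<phi> z0 r" using uz0 m by simp
  have phit: "\<phi> (z0 + complex_of_real r * cis t) = m - (m - d) * max 0 (2 * cos t - 1)" for t
  proof -
    have "(Re (z0 + complex_of_real r * cis t - z0) - r/2) / (r/2) = 2 * cos t - 1"
      using r by (simp add: field_simps)
    then show ?thesis by (simp add: \<phi>_def)
  qed
  define I where "I = integral {0..2*pi} (\<lambda>t. max 0 (2 * cos t - 1))"
  have intg: "(\<lambda>t. max 0 (2 * cos t - 1)) integrable_on {0..2*pi}"
    by (intro integrable_continuous_real continuous_intros)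
  have "integral {0..2*pi} (\<lambda>t. \<phi> (z0 + complex_of_real r * cis t)) =
        integral {0..2*pi} (\<lambda>t. m - (m - d) * max 0 (2 * cos t - 1))"
    by (simp add: phit)
  also have "\<dots> = integral {0..2*pi} (\<lambda>t. m) - integral {0..2*pi} (\<lambda>t. (m - d) * max 0 (2 * cos t - 1))"
    by (rule integral_diff) (auto intro!: integrable_continuous_real continuous_intros)
  also have "\<dots> = 2*pi*m - (m - d) * I"
    by (simp add: I_def)
  finally have "circle_mean \<phi> z0 r = (2*pi*m - (m - d) * I) / (2*pi)"
    by (simp add: circle_mean_def)
  also have "\<dots> = m - (m - d) * I / (2*pi)" by (simp add: field_simps)
  finally have "circle_mean \<phi> z0 r = m - (m - d) * I / (2*pi)" .
  moreover have "(m - d) * I / (2*pi) > 0" using d integral_G_pos by (simp add: I_def)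
  ultimately show False using le by linarith
qed

lemma subharmonic_zero:
  assumes "open \<Omega>"
  shows "subharmonic_on \<Omega> (\<lambda>_. 0)"
  unfolding subharmonic_on_def
proof (intro conjI ballI assms)
  fix z assume "z \<in> \<Omega>"
  show "Limsup (at z) (\<lambda>_. 0::ereal) \<le> 0" by (rule Limsup_bounded) simp
next
  fix z assume "z \<in> \<Omega>" show "(0::ereal) < \<infinity>" by simp
next
  fix a assume a: "a \<in> \<Omega>"
  obtain e where e: "e > 0" "ball a e \<subseteq> \<Omega>" using assms a open_contains_ball by blast
  show "\<exists>r0>0. \<forall>r. 0 < r \<and> r < r0 \<longrightarrow> cball a r \<subseteq> \<Omega> \<and>
        (\<forall>\<phi>. continuous_on (sphere a r) \<phi> \<and> (\<forall>z\<in>sphere a r. (0::ereal) \<le> ereal (\<phi> z))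
              \<longrightarrow> 0 \<le> ereal (circle_mean \<phi> a r))"
  proof (intro exI[of _ e] conjI allI impI e(1))
    fix r assume r: "0 < r \<and> r < e"
    have "cball a r \<subseteq> ball a e" using r by (simp add: cball_subset_ball_iff)
    then show "cball a r \<subseteq> \<Omega>" using e(2) by blast
    fix \<phi> assume phi: "continuous_on (sphere a r) \<phi> \<and> (\<forall>z\<in>sphere a r. (0::ereal) \<le> ereal (\<phi> z))"
    have onS: "a + complex_of_real r * cis t \<in> sphere a r" for t using r by (simp add: dist_norm norm_mult)
    have cm: "continuous_on {0..2*pi} (\<lambda>t. a + complex_of_real r * cis t)" by (intro continuous_intros)
    have im: "(\<lambda>t. a + complex_of_real r * cis t) ` {0..2*pi} \<subseteq> sphere a r" using onS by blast
    have "continuous_on {0..2*pi} (\<lambda>t. \<phi> (a + complex_of_real r * cis t))"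
      by (rule continuous_on_compose2[OF conjunct1[OF phi] cm im])
    then have "integral {0..2*pi} (\<lambda>t. \<phi> (a + complex_of_real r * cis t)) \<ge> 0"
      using phi onS by (intro integral_nonneg integrable_continuous_real) auto
    then show "0 \<le> ereal (circle_mean \<phi> a r)" by (simp add: circle_mean_def)
  qed
qed

lemma affine_transfer:
  fixes L F V0 :: "complex set" and y d :: complex
  assumes d: "d \<noteq> 0"
  defines "g \<equiv> (\<lambda>z. (z - y) / d)"
  shows "g ` ((\<lambda>w. y + d * w) ` V0 - L) = V0 - g ` L"
proof -
  have inj: "inj g" using d by (auto simp: g_def inj_on_def)
  have "g ` ((\<lambda>w. y + d * w) ` V0) = V0" using d by (force simp: g_def image_image)
  then show ?thesis using image_set_diff[OF inj] by simp
qed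

lemma separate_step:
  fixes L F :: "complex set" and E :: "complex set" and y p :: complex
  assumes cL: "compact L" and conL: "connected L" and yL: "y \<in> L" and pL: "p \<in> L"
    and Lb: "L \<subseteq> cball y (dist y p)" and LF: "L \<subseteq> F" and yp: "y \<noteq> p"
    and intF: "interior F = {}"
    and VE: "ball y (4 * dist y p) \<subseteq> E"
    and Fconn: "\<And>V. open V \<Longrightarrow> connected V \<Longrightarrow> V \<subseteq> E \<Longrightarrow> connected (V - F)"
  shows False
proof -
  define d where "d = p - y"
  have d0: "d \<noteq> 0" using yp by (simp add: d_def)
  have nd: "norm d = dist y p" by (simp add: d_def dist_norm norm_minus_commute)
  define g where "g = (\<lambda>z. (z - y) / d)"
  define V0 where "V0 = {w::complex. 1/3 < Re w \<and> Re w < 2/3} \<inter> ball (1/2) 3"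
  define V where "V = (\<lambda>w. y + d * w) ` V0"
  have Veq: "V = g -` V0"
  proof
    show "V \<subseteq> g -` V0" using d0 by (auto simp: V_def g_def)
    show "g -` V0 \<subseteq> V"
    proof
      fix z assume "z \<in> g -` V0"
      then have "g z \<in> V0" "z = y + d * g z" using d0 by (auto simp: g_def)
      then show "z \<in> V" unfolding V_def by blast
    qed
  qed
  have contg: "continuous (at x) g" for x unfolding g_def using d0 by (intro continuous_intros) auto
  have "open V0" unfolding V0_def
    by (intro open_Int open_ball open_Collect_conj open_Collect_less continuous_intros)
  then have oV: "open V" unfolding Veq by (rule continuous_open_vimage) (rule contg)
  have "{w::complex. 1/3 < Re w \<and> Re w < 2/3} = {w. Re w > 1/3} \<inter> {w. Re w < 2/3}" by auto
  then have "convex V0" unfolding V0_def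
    by (simp only:) (intro convex_Int convex_halfspace_Re_gt convex_halfspace_Re_lt convex_ball)
  then have "connected V0" by (rule convex_connected)
  then have cV: "connected V" unfolding V_def by (intro connected_continuous_image continuous_intros)
  have VsE: "V \<subseteq> E"
  proof
    fix z assume "z \<in> V"
    then obtain w where w: "w \<in> V0" "z = y + d * w" by (auto simp: V_def)
    have "dist (1/2) w < 3" using w by (simp add: V0_def)
    then have "norm w < 7/2" using norm_triangle_ineq2[of w "1/2"] by (simp add: dist_norm norm_minus_commute)
    have "norm (d * w) = norm d * norm w" by (simp add: norm_mult)
    also have "\<dots> \<le> norm d * (7/2)" using \<open>norm w < 7/2\<close> by (intro mult_left_mono) auto
    finally have "norm (d * w) \<le> dist y p * (7/2)" using nd by simp
    moreover have "dist y z = norm (d * w)" using w by (simp add: dist_norm norm_minus_commute)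
    moreover have "dist y p > 0" using yp by simp
    ultimately have "dist y z < 4 * dist y p" by linarith
    then show "z \<in> E" using VE by auto
  qed
  have c1: "connected (V - F)" using Fconn oV cV VsE by blast
  have "V - L \<subseteq> closure (V - F)"
  proof -
    have "closure (- F) = UNIV" using intF by (simp add: closure_interior)
    then have "V \<subseteq> V \<inter> closure (- F)" by simp
    also have "\<dots> \<subseteq> closure (V \<inter> - F)" by (rule open_Int_closure_subset[OF oV])
    finally have "V \<subseteq> closure (V - F)" by (simp add: Diff_eq)
    then show ?thesis by blast
  qed
  then have c2: "connected (V - L)" using c1 LF by (intro connected_intermediate_closure[OF c1]) auto
  have "g ` (V - L) = V0 - g ` L" unfolding V_def g_def by (rule affine_transfer[OF d0])
  moreover have "connected (g ` (V - L))" unfolding g_def using c2 d0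
    by (intro connected_continuous_image continuous_intros) auto
  ultimately have c3: "connected (V0 - g ` L)" by simp
  have cgL: "compact (g ` L)" unfolding g_def using cL d0 by (intro compact_continuous_image continuous_intros) auto
  have cngL: "connected (g ` L)" unfolding g_def using conL d0 by (intro connected_continuous_image continuous_intros) auto
  have "g y = 0" by (simp add: g_def)
  then have g0: "0 \<in> g ` L" using yL by force
  have "g p = 1" using d0 by (simp add: g_def d_def)
  then have g1: "1 \<in> g ` L" using pL by force
  have gb: "g ` L \<subseteq> cball 0 1"
  proof
    fix w assume "w \<in> g ` L"
    then obtain z where z: "z \<in> L" "w = g z" by blast
    have "norm (z - y) \<le> norm d" using z Lb nd by (auto simp: dist_norm norm_minus_commute)
    then have "norm w \<le> 1" using z d0 by (simp add: g_def norm_divide divide_le_eq_1)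
    then show "w \<in> cball 0 1" by simp
  qed
  show False using sep_lemma[OF cgL cngL g0 g1 gb] c3 by (simp add: V0_def)
qed

lemma core:
  fixes \<F> :: "complex set set" and E :: "complex set"
  assumes oE: "open E" and cF: "countable \<F>"
    and Fcl: "\<And>F. F \<in> \<F> \<Longrightarrow> closedin (top_of_set E) F"
    and Fint: "\<And>F. F \<in> \<F> \<Longrightarrow> interior F = {}"
    and Fconn: "\<And>F V. F \<in> \<F> \<Longrightarrow> open V \<Longrightarrow> connected V \<Longrightarrow> V \<subseteq> E \<Longrightarrow> connected (V - F)"
    and sh: "subharmonic_on \<Omega> u" and z0O: "z0 \<in> \<Omega>" and z0E: "z0 \<in> E" and cz: "c < u z0" and rho: "\<rho> > 0"
  shows "\<exists>z \<in> E - \<Union>\<F>. z \<noteq> z0 \<and> dist z z0 < \<rho> \<and> c \<le> u z"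
proof (rule ccontr)
  assume nH: "\<not> ?thesis"
  have HH: "u z < c" if "z \<in> E" "z \<notin> \<Union>\<F>" "z \<noteq> z0" "dist z z0 < \<rho>" for z
    using nH that by (auto simp: not_le)
  have oO: "open \<Omega>" using sh by (rule sh_open)
  have oOE: "open (\<Omega> \<inter> E)" using oO oE by (rule open_Int)
  have z0OE: "z0 \<in> \<Omega> \<inter> E" using z0O z0E by (rule IntI)
  obtain r0 where r0: "r0 > 0" "ball z0 r0 \<subseteq> \<Omega> \<inter> E"
    using oOE z0OE open_contains_ball by blast
  define r where "r = min (r0/6) (\<rho>/2)"
  have r: "r > 0" "r < \<rho>" "6 * r \<le> r0" using r0 rho by (auto simp: r_def)
  have cbr: "cball z0 (5 * r) \<subseteq> \<Omega> \<inter> E"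
  proof -
    have "cball z0 (5 * r) \<subseteq> ball z0 r0" using r by (simp add: cball_subset_ball_iff)
    then show ?thesis using r0(2) by blast
  qed
  have "cball z0 r \<subseteq> cball z0 (5 * r)" using r by (intro subset_cball) simp
  then have cbr1: "cball z0 r \<subseteq> \<Omega> \<inter> E" using cbr by blast
  define Q where "Q = {z \<in> cball z0 r. c \<le> u z}"
  have cQ: "compact Q" unfolding Q_def using cbr1 by (intro usc_compact[OF sh]) auto
  have z0Q: "z0 \<in> Q" using cz r by (simp add: Q_def)
  have QE: "Q \<subseteq> cball z0 r" by (auto simp: Q_def)
  have "\<exists>C. connected C \<and> C \<subseteq> Q \<inter> cball z0 r \<and> z0 \<in> C \<and> C \<inter> sphere z0 r \<noteq> {}"
  proof (rule wire[OF cQ z0Q r(1)])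
    fix U assume cU: "compact U" and z0U: "z0 \<in> U" and Us: "U \<subseteq> Q \<inter> ball z0 r"
      and cR: "compact (Q \<inter> cball z0 r - U)"
    define Z where "Z = (Q \<inter> cball z0 r - U) \<union> - ball z0 r"
    have clZ: "closed Z" unfolding Z_def using cR by (intro closed_Un compact_imp_closed closed_Compl open_ball)
    have UZ: "U \<inter> Z = {}" using Us by (auto simp: Z_def)
    obtain \<delta> where \<delta>: "\<delta> > 0" "\<And>x y. x \<in> U \<Longrightarrow> y \<in> Z \<Longrightarrow> \<delta> \<le> dist x y"
      using separate_compact_closed[OF cU clZ UZ] by blast
    define W where "W = (\<Union>x\<in>U. ball x (\<delta>/2))"
    have oW: "open W" by (simp add: W_def open_UN)
    have UW: "U \<subseteq> W" using \<delta> by (auto simp: W_def)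
    have near: "\<exists>x\<in>U. dist x y < \<delta>" if yc: "y \<in> closure W" for y
    proof -
      obtain w where w: "w \<in> W" "dist w y < \<delta>/2"
        using yc \<delta>(1) unfolding closure_approachable by (meson half_gt_zero)
      then obtain x where x: "x \<in> U" "dist x w < \<delta>/2" by (auto simp: W_def)
      have "dist x y \<le> dist x w + dist w y" by (rule dist_triangle)
      then show ?thesis using x w by (intro bexI[OF _ x(1)]) linarith
    qed
    have clW: "closure W \<inter> Z = {}"
    proof -
      have False if yW: "y \<in> closure W" "y \<in> Z" for y
      proof -
        obtain x where "x \<in> U" "dist x y < \<delta>" using near yW(1) by blast
        then show False using \<delta>(2) yW(2) by fastforce
      qed
      then show ?thesis by blast
    qed
    have cWb: "closure W \<subseteq> ball z0 r" using clW by (auto simp: Z_def)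
    have bW: "bounded W" using cWb closure_subset by (meson bounded_ball bounded_subset order_trans)
    have cWO: "closure W \<subseteq> \<Omega>" using cWb cbr1 ball_subset_cball by blast
    have fr: "u z < c" if z: "z \<in> frontier W" for z
    proof -
      have zc: "z \<in> closure W" "z \<notin> W" using z oW by (auto simp: frontier_def interior_open)
      then have "z \<notin> U" using UW by blast
      moreover have "z \<notin> Z" using zc clW by blast
      moreover have "z \<in> cball z0 r" using zc cWb by auto
      ultimately have "z \<notin> Q" by (auto simp: Z_def)
      then show "u z < c" using \<open>z \<in> cball z0 r\<close> by (simp add: Q_def not_le)
    qed
    have z0W: "z0 \<in> W" using UW z0U by blast
    have "u z0 < c" by (rule max_principle[OF sh oW bW cWO fr z0W])
    then show False using cz by simp
  qed
  then obtain C where C: "connected C" "C \<subseteq> Q \<inter> cball z0 r" "z0 \<in> C" "C \<inter> sphere z0 r \<noteq> {}" by blast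
  from C(4) obtain q where q0: "q \<in> C" "q \<in> sphere z0 r" by blast
  then have q: "q \<in> C" "dist z0 q = r" by auto
  define K where "K = closure C"
  have KQ: "K \<subseteq> Q" unfolding K_def using C cQ by (meson closure_minimal compact_imp_closed le_inf_iff)
  have cK: "compact K" unfolding K_def using KQ cQ by (metis K_def bounded_subset compact_eq_bounded_closed closed_closure compact_imp_bounded)
  have conK: "connected K" unfolding K_def using C(1) by (rule connected_imp_connected_closure)
  have z0K: "z0 \<in> K" "q \<in> K" using C(3) q(1) closure_subset by (auto simp: K_def)
  have KE: "K \<subseteq> E" using KQ QE cbr1 by blast
  have KP: "z \<in> \<Union>\<F>" if "z \<in> K" "z \<noteq> z0" for z
  proof (rule ccontr)
    assume "z \<notin> \<Union>\<F>"
    moreover have "z \<in> Q" using that KQ by blast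
    moreover have "dist z z0 < \<rho>" using \<open>z \<in> Q\<close> r by (auto simp: Q_def dist_commute)
    ultimately have "u z < c" using HH KE that by blast
    then show False using \<open>z \<in> Q\<close> by (auto simp: Q_def not_le[symmetric])
  qed
  define \<F>' where "\<F>' = insert {z0} \<F>"
  have clF': "\<exists>T. closed T \<and> F = E \<inter> T" if "F \<in> \<F>'" for F
  proof (cases "F = {z0}")
    case True then show ?thesis using z0E by (intro exI[of _ "{z0}"]) auto
  next
    case False then have "F \<in> \<F>" using that by (simp add: \<F>'_def)
    then show ?thesis using Fcl closedin_closed by blast
  qed
  have "\<exists>F\<in>\<F>'. \<not> K \<subseteq> closure (K - F)"
  proof (rule ccontr)
    assume "\<not> ?thesis"
    then have dense: "K \<subseteq> closure (K - F)" if "F \<in> \<F>'" for F using that by blast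
    have "K \<subseteq> closure (\<Inter>((\<lambda>F. K - F) ` \<F>'))"
    proof (rule Baire[OF compact_imp_closed[OF cK]])
      show "countable ((\<lambda>F. K - F) ` \<F>')" using cF by (simp add: \<F>'_def)
    next
      fix T assume "T \<in> (\<lambda>F. K - F) ` \<F>'"
      then obtain F where F: "F \<in> \<F>'" "T = K - F" by blast
      obtain T' where T': "closed T'" "F = E \<inter> T'" using clF'[OF F(1)] by blast
      have "T = K \<inter> - T'" using F(2) T'(2) KE by blast
      then have "openin (top_of_set K) T" using T'(1) by (auto simp: openin_open open_Compl)
      then show "openin (top_of_set K) T \<and> K \<subseteq> closure T" using dense F by simp
    qed
    moreover have "\<Inter>((\<lambda>F. K - F) ` \<F>') = {}"
    proof -
      have False if z: "z \<in> \<Inter>((\<lambda>F. K - F) ` \<F>')" for z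
      proof -
        have "{z0} \<in> \<F>'" by (simp add: \<F>'_def)
        then have "z \<in> K - {z0}" using z by blast
        then have "z \<in> \<Union>\<F>" using KP by blast
        then obtain F where "F \<in> \<F>" "z \<in> F" by blast
        moreover have "F \<in> \<F>'" using \<open>F \<in> \<F>\<close> by (simp add: \<F>'_def)
        then have "z \<in> K - F" using z by blast
        ultimately show False by blast
      qed
      then show ?thesis by blast
    qed
    ultimately show False using z0K by simp
  qed
  then obtain F y where F: "F \<in> \<F>'" and yK: "y \<in> K" and ycl: "y \<notin> closure (K - F)" by blast
  obtain \<epsilon> where \<epsilon>: "\<epsilon> > 0" "ball y \<epsilon> \<subseteq> - closure (K - F)"
    using open_contains_ball[of "- closure (K - F)"] ycl by blast
  have KF: "K \<inter> ball y \<epsilon> \<subseteq> F" using \<epsilon>(2) closure_subset by blast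
  define \<epsilon>' where "\<epsilon>' = min (\<epsilon>/2) (r/3)"
  have \<epsilon>': "\<epsilon>' > 0" "\<epsilon>' < \<epsilon>" "3 * \<epsilon>' \<le> r" using \<epsilon> r by (auto simp: \<epsilon>'_def)
  have "\<exists>C. connected C \<and> C \<subseteq> K \<inter> cball y \<epsilon>' \<and> y \<in> C \<and> C \<inter> sphere y \<epsilon>' \<noteq> {}"
  proof (rule wire[OF cK yK \<epsilon>'(1)])
    fix U assume cU: "compact U" and yU: "y \<in> U" and Us: "U \<subseteq> K \<inter> ball y \<epsilon>'"
      and cR: "compact (K \<inter> cball y \<epsilon>' - U)"
    define B where "B = (K - ball y \<epsilon>') \<union> (K \<inter> cball y \<epsilon>' - U)"
    have "closed (K - ball y \<epsilon>')" using cK by (simp add: Diff_eq closed_Int compact_imp_closed closed_Compl)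
    then have "closed B" unfolding B_def by (rule closed_Un[OF _ compact_imp_closed[OF cR]])
    moreover have "closed U" using cU by (rule compact_imp_closed)
    moreover have "K \<subseteq> U \<union> B" by (auto simp: B_def)
    moreover have "U \<inter> B \<inter> K = {}" using Us by (auto simp: B_def)
    moreover have "U \<inter> K \<noteq> {}" using yU yK by blast
    moreover have "B \<inter> K \<noteq> {}"
    proof -
      have "z0 \<notin> ball y \<epsilon>' \<or> q \<notin> ball y \<epsilon>'"
      proof (rule ccontr)
        assume "\<not> ?thesis"
        then have "dist y z0 < \<epsilon>'" "dist y q < \<epsilon>'" by auto
        then have "dist z0 q < 2 * \<epsilon>'" using dist_triangle3[of z0 q y] by linarith
        then show False using q(2) \<epsilon>' by linarith
      qed
      then show ?thesis using z0K Us by (auto simp: B_def)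
    qed
    ultimately show False using conK unfolding connected_closed by blast
  qed
  then obtain L0 where L0: "connected L0" "L0 \<subseteq> K \<inter> cball y \<epsilon>'" "y \<in> L0" "L0 \<inter> sphere y \<epsilon>' \<noteq> {}" by blast
  from L0(4) obtain p where p0: "p \<in> L0" "p \<in> sphere y \<epsilon>'" by blast
  then have p: "p \<in> L0" "dist y p = \<epsilon>'" by auto
  define L where "L = closure L0"
  have LKc: "L \<subseteq> K \<inter> cball y \<epsilon>'" unfolding L_def using L0(2) cK
    by (intro closure_minimal) (auto intro: closed_Int compact_imp_closed)
  have cL: "compact L" using LKc by (metis L_def bounded_cball bounded_subset closed_closure compact_eq_bounded_closed le_inf_iff)
  have conL: "connected L" unfolding L_def by (rule connected_imp_connected_closure[OF L0(1)])
  have yL: "y \<in> L" "p \<in> L" using L0(3) p(1) closure_subset by (auto simp: L_def)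
  have LF: "L \<subseteq> F"
  proof -
    have "cball y \<epsilon>' \<subseteq> ball y \<epsilon>" using \<epsilon>' by (simp add: cball_subset_ball_iff)
    then show ?thesis using LKc KF by blast
  qed
  have yp: "y \<noteq> p" using p(2) \<epsilon>' by auto
  show False
  proof (cases "F = {z0}")
    case True then show ?thesis using LF yL yp by blast
  next
    case False
    then have FF: "F \<in> \<F>" using F by (simp add: \<F>'_def)
    have VE: "ball y (4 * dist y p) \<subseteq> E"
    proof
      fix z assume z: "z \<in> ball y (4 * dist y p)"
      have "dist z0 y \<le> r" using yK KQ QE by auto
      then have "dist z0 z < 5 * r" using z p(2) \<epsilon>' dist_triangle[of z0 z y] by (simp add: dist_commute)
      then show "z \<in> E" using cbr by auto
    qed
    show False
      by (rule separate_step[OF cL conL yL(1) yL(2) _ LF yp Fint[OF FF] VE Fconn[OF FF]])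
         (use LKc p(2) in auto)
  qed
qed

lemma final_props:
  fixes \<F> :: "complex set set" and E A :: "complex set"
  assumes oE: "open E"
    and C: "\<And>\<Omega> u z0 c \<rho>. subharmonic_on \<Omega> u \<Longrightarrow> z0 \<in> \<Omega> \<Longrightarrow> z0 \<in> E \<Longrightarrow> c < u z0 \<Longrightarrow> \<rho> > 0 \<Longrightarrow>
            \<exists>z\<in>A. z \<noteq> z0 \<and> dist z z0 < \<rho> \<and> c \<le> u z"
    and AE: "A \<subseteq> E"
  shows "(\<forall>z\<in>E. \<not> thin_at A z) \<and> E \<subseteq> closure A \<and> locally_regular A \<and> (\<forall>z\<in>E. rel_extremal_star A E z = 0)"
proof -
  have clA: "z \<in> closure (A - {z})" if z: "z \<in> E" for z
    unfolding closure_approachable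
  proof (intro allI impI)
    fix e :: real assume e: "e > 0"
    have "\<exists>y\<in>A. y \<noteq> z \<and> dist y z < e \<and> -1 \<le> (\<lambda>_. 0::ereal) y"
      by (rule C[OF subharmonic_zero[OF open_UNIV] UNIV_I z _ e]) simp
    then show "\<exists>y\<in>A - {z}. dist y z < e" by blast
  qed
  have nthin: "\<not> thin_at A z" if z: "z \<in> E" for z
  proof
    assume "thin_at A z"
    then obtain \<Omega> u where O: "open \<Omega>" "z \<in> \<Omega>" "subharmonic_on \<Omega> u"
        and lt: "Limsup (at z within (A - {z})) u < u z"
      using clA[OF z] unfolding thin_at_def by blast
    obtain c where c: "Limsup (at z within (A - {z})) u < c" "c < u z" using lt dense by blast
    have "eventually (\<lambda>x. u x < c) (at z within (A - {z}))" using c(1) by (rule Limsup_lessD)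
    then obtain d where d: "d > 0" "\<And>x. x \<in> A - {z} \<Longrightarrow> x \<noteq> z \<Longrightarrow> dist x z < d \<Longrightarrow> u x < c"
      unfolding eventually_at by blast
    obtain y where y: "y \<in> A" "y \<noteq> z" "dist y z < d" "c \<le> u y" using C[OF O(3) O(2) z c(2) d(1)] by blast
    have "u y < c" using d(2)[of y] y by blast
    then show False using y(4) by simp
  qed
  have clE: "E \<subseteq> closure A"
  proof
    fix z assume "z \<in> E"
    then have "z \<in> closure (A - {z})" by (rule clA)
    then show "z \<in> closure A" using closure_mono[of "A - {z}" A] by blast
  qed
  have bound: "u z \<le> 0" if sh: "subharmonic_on \<Omega> u" and zO: "z \<in> \<Omega>" and zE: "z \<in> E"
      and le0: "\<And>w. w \<in> A \<inter> \<Omega> \<Longrightarrow> u w \<le> 0" for \<Omega> u z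
  proof (rule ccontr)
    assume "\<not> u z \<le> 0"
    then have "0 < u z" by simp
    then obtain c where c: "0 < c" "c < u z" using dense by blast
    have "open \<Omega>" using sh by (rule sh_open)
    then obtain \<rho> where \<rho>: "\<rho> > 0" "ball z \<rho> \<subseteq> \<Omega>" using zO open_contains_ball by blast
    obtain y where y: "y \<in> A" "dist y z < \<rho>" "c \<le> u y" using C[OF sh zO zE c(2) \<rho>(1)] by blast
    have "y \<in> \<Omega>" using y(2) \<rho>(2) by (auto simp: dist_commute)
    then have "u y \<le> 0" using le0 y(1) by blast
    then show False using c y(3) by simp
  qed
  have relzero: "rel_extremal (A \<inter> \<Omega>) \<Omega> z = 0" if O: "open \<Omega>" and zO: "z \<in> \<Omega>" and zE: "z \<in> E" for \<Omega> z
  proof -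
    define SS where "SS = {u z | u. subharmonic_on \<Omega> u \<and> (\<forall>w\<in>\<Omega>. u w \<le> 1) \<and> (\<forall>w\<in>A \<inter> \<Omega>. u w \<le> 0)}"
    have "Sup SS \<le> 0"
    proof (rule Sup_least)
      fix x assume "x \<in> SS"
      then obtain u where "x = u z" "subharmonic_on \<Omega> u" "\<forall>w\<in>A \<inter> \<Omega>. u w \<le> 0" by (auto simp: SS_def)
      then show "x \<le> 0" using bound zO zE by blast
    qed
    moreover have "(0::ereal) \<in> SS" unfolding SS_def
      by (rule CollectI, rule exI[of _ "\<lambda>_. 0"]) (simp add: subharmonic_zero[OF O])
    then have "0 \<le> Sup SS" by (rule Sup_upper)
    ultimately show ?thesis by (simp add: rel_extremal_def SS_def)
  qed
  have star0: "rel_extremal_star (A \<inter> \<Omega>) \<Omega> z = 0" if O: "open \<Omega>" and zO: "z \<in> \<Omega>" and zE: "z \<in> E" for \<Omega> z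
  proof -
    have ev: "eventually (\<lambda>x. rel_extremal (A \<inter> \<Omega>) \<Omega> x \<le> 0) (at z within \<Omega>)"
      unfolding eventually_at_topological using oE zE relzero[OF O] by (intro exI[of _ E]) auto
    have "Limsup (at z within \<Omega>) (rel_extremal (A \<inter> \<Omega>) \<Omega>) \<le> 0" using ev by (rule Limsup_bounded)
    then show ?thesis using relzero[OF O zO zE]
      by (simp add: rel_extremal_star_def usc_reg_def max_def)
  qed
  have lr: "locally_regular A" unfolding locally_regular_def
    using star0 AE by blast
  have "\<forall>z\<in>E. rel_extremal_star A E z = 0"
  proof
    fix z assume "z \<in> E"
    then have "rel_extremal_star (A \<inter> E) E z = 0" using star0[OF oE] by blast
    moreover have "A \<inter> E = A" using AE by blast
    ultimately show "rel_extremal_star A E z = 0" by simp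
  qed
  then show ?thesis using nthin clE lr by blast
qed

lemma fam:
  fixes S :: "(complex \<times> complex) set" and E :: "complex set"
  assumes oE: "open E" and S_sub: "S \<subseteq> E \<times> E" and S_closed: "closedin (top_of_set (E \<times> E)) S"
    and S_int: "interior S = {}"
    and S_conn: "\<And>U. U \<subseteq> E \<times> E \<Longrightarrow> open U \<Longrightarrow> connected U \<Longrightarrow> U \<noteq> {} \<Longrightarrow> connected (U - S)"
  shows "\<exists>\<F>. countable \<F> \<and> (\<forall>F\<in>\<F>. closedin (top_of_set E) F \<and> interior F = {} \<and>
            (\<forall>V. open V \<and> connected V \<and> V \<subseteq> E \<longrightarrow> connected (V - F))) \<and>
          E - \<Union>\<F> = {a \<in> E. interior {w. (a, w) \<in> S} = {}}"
proof -
  obtain \<B> :: "complex set set" where B: "countable \<B>" "\<And>C. C \<in> \<B> \<Longrightarrow> open C"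
    "\<And>S. open S \<Longrightarrow> \<exists>U. U \<subseteq> \<B> \<and> S = \<Union>U"
    using univ_second_countable by blast
  define Fd where "Fd = (\<lambda>D. {z \<in> E. D \<subseteq> {w. (z, w) \<in> S}})"
  define \<F> where "\<F> = Fd ` (\<B> - {{}})"
  obtain T where T: "closed T" "S = (E \<times> E) \<inter> T" using S_closed closedin_closed by blast
  have memS: "(z, w) \<in> S \<longleftrightarrow> z \<in> E \<and> w \<in> E \<and> (z, w) \<in> T" for z w using T(2) by auto
  have clF: "closedin (top_of_set E) (Fd D)" for D
  proof -
    define X where "X = (\<Inter>w\<in>D. {z. w \<in> E \<and> (z, w) \<in> T})"
    have "closed {z. w \<in> E \<and> (z, w) \<in> T}" for w
    proof (cases "w \<in> E")
      case True
      have "{z. w \<in> E \<and> (z, w) \<in> T} = (\<lambda>z. (z, w)) -` T" using True by auto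
      moreover have "closed ((\<lambda>z. (z, w)) -` T)"
        by (rule continuous_closed_vimage[OF T(1)]) (intro continuous_intros)
      ultimately show ?thesis by simp
    next
      case False then show ?thesis by simp
    qed
    then have "closed X" unfolding X_def by (intro closed_INT) blast
    moreover have "Fd D = E \<inter> X" unfolding Fd_def X_def using memS by auto
    ultimately show ?thesis using closedin_closed by blast
  qed
  have intF: "interior (Fd D) = {}" if D: "D \<in> \<B>" "D \<noteq> {}" for D
  proof (rule ccontr)
    assume "interior (Fd D) \<noteq> {}"
    then obtain x where x: "x \<in> interior (Fd D)" by blast
    obtain e where e: "e > 0" "ball x e \<subseteq> interior (Fd D)"
      using open_contains_ball[of "interior (Fd D)"] x by blast
    obtain w where w: "w \<in> D" using D(2) by blast
    have sub: "ball x e \<times> D \<subseteq> S"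
    proof
      fix p assume "p \<in> ball x e \<times> D"
      then obtain a b where p: "p = (a, b)" "a \<in> ball x e" "b \<in> D" by blast
      then have "a \<in> Fd D" using e(2) interior_subset by blast
      then show "p \<in> S" using p by (auto simp: Fd_def)
    qed
    have "open (ball x e \<times> D)" using B(2)[OF D(1)] by (intro open_Times open_ball)
    then have "ball x e \<times> D \<subseteq> interior S" by (rule interior_maximal[OF sub])
    moreover have "(x, w) \<in> ball x e \<times> D" using e w by simp
    ultimately show False using S_int by blast
  qed
  have connF: "connected (V - Fd D)" if D: "D \<in> \<B>" "D \<noteq> {}" and V: "open V" "connected V" "V \<subseteq> E" for D V
  proof (cases "D \<subseteq> E \<and> V \<noteq> {}")
    case False
    then consider "\<not> D \<subseteq> E" | "V = {}" by blast
    then show ?thesis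
    proof cases
      case 1
      have "Fd D = {}"
      proof (rule ccontr)
        assume "Fd D \<noteq> {}"
        then obtain z where "z \<in> Fd D" by blast
        then have "D \<subseteq> {w. (z, w) \<in> S}" by (simp add: Fd_def)
        then have "D \<subseteq> E" using memS by blast
        then show False using 1 by blast
      qed
      then show ?thesis using V(2) by simp
    next
      case 2 then show ?thesis by simp
    qed
  next
    case True
    then have DE: "D \<subseteq> E" and Vne: "V \<noteq> {}" by auto
    obtain w0 where w0: "w0 \<in> D" using D(2) by blast
    obtain \<eta> where \<eta>: "\<eta> > 0" "ball w0 \<eta> \<subseteq> D" using open_contains_ball[of D] B(2)[OF D(1)] w0 by blast
    define D0 where "D0 = ball w0 \<eta>"
    define U where "U = V \<times> D0"
    have UE: "U \<subseteq> E \<times> E" using V(3) DE \<eta>(2) by (auto simp: U_def D0_def)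
    have oU: "open U" unfolding U_def D0_def using V(1) by (intro open_Times open_ball)
    have cU: "connected U" unfolding U_def D0_def using V(2) by (intro connected_Times connected_ball)
    have Une: "U \<noteq> {}" using Vne \<eta>(1) by (auto simp: U_def D0_def)
    have cUS: "connected (U - S)" by (rule S_conn[OF UE oU cU Une])
    have key: "z \<in> V - Fd D" if "(z, w) \<in> U - S" for z w
    proof -
      have zw: "z \<in> V" "w \<in> D0" "(z, w) \<notin> S" using that by (auto simp: U_def)
      have "z \<notin> Fd D"
      proof
        assume "z \<in> Fd D"
        then have "(z, w) \<in> S" using zw(2) \<eta>(2) by (auto simp: Fd_def D0_def)
        then show False using zw(3) by blast
      qed
      then show ?thesis using zw(1) by blast
    qed
    have meet: "\<exists>p. p \<in> U - S \<and> fst p \<in> A" if oA: "open A" and ne: "A \<inter> (V - Fd D) \<noteq> {}" for A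
    proof -
      obtain z1 where z1: "z1 \<in> A" "z1 \<in> V" using ne by blast
      have oO: "open ((A \<inter> V) \<times> D0)" unfolding D0_def using oA V(1) by (intro open_Times open_Int open_ball)
      have "(z1, w0) \<in> (A \<inter> V) \<times> D0" using z1 \<eta>(1) by (simp add: D0_def)
      then have "\<not> (A \<inter> V) \<times> D0 \<subseteq> S" using interior_maximal[OF _ oO, of S] S_int by blast
      then obtain p where p: "p \<in> (A \<inter> V) \<times> D0" "p \<notin> S" by blast
      then have "p \<in> U - S" "fst p \<in> A" by (auto simp: U_def)
      then show ?thesis by blast
    qed
    show ?thesis
    proof (rule ccontr)
      assume "\<not> connected (V - Fd D)"
      then obtain A B where AB: "open A" "open B" "V - Fd D \<subseteq> A \<union> B" "A \<inter> B \<inter> (V - Fd D) = {}"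
          "A \<inter> (V - Fd D) \<noteq> {}" "B \<inter> (V - Fd D) \<noteq> {}"
        unfolding connected_def by blast
      define A' where "A' = A \<times> (UNIV :: complex set)"
      define B' where "B' = B \<times> (UNIV :: complex set)"
      have "open A'" "open B'" using AB by (simp_all add: A'_def B'_def open_Times)
      moreover have "U - S \<subseteq> A' \<union> B'"
      proof
        fix p assume p: "p \<in> U - S"
        obtain z w where pz: "p = (z, w)" by (cases p)
        then have "z \<in> V - Fd D" using key p by blast
        then show "p \<in> A' \<union> B'" using AB(3) pz by (auto simp: A'_def B'_def)
      qed
      moreover have "A' \<inter> B' \<inter> (U - S) = {}"
      proof -
        have False if p: "p \<in> A' \<inter> B' \<inter> (U - S)" for p
        proof -
          obtain z w where pz: "p = (z, w)" by (cases p)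
          then have "z \<in> V - Fd D" using key p by blast
          moreover have "z \<in> A" "z \<in> B" using p pz by (auto simp: A'_def B'_def)
          ultimately show False using AB(4) by blast
        qed
        then show ?thesis by blast
      qed
      moreover have "A' \<inter> (U - S) \<noteq> {}"
      proof -
        obtain p where "p \<in> U - S" "fst p \<in> A" using meet[OF AB(1) AB(5)] by blast
        then show ?thesis by (auto simp: A'_def mem_Times_iff)
      qed
      moreover have "B' \<inter> (U - S) \<noteq> {}"
      proof -
        obtain p where "p \<in> U - S" "fst p \<in> B" using meet[OF AB(2) AB(6)] by blast
        then show ?thesis by (auto simp: B'_def mem_Times_iff)
      qed
      ultimately show False using cUS unfolding connected_def by blast
    qed
  qed
  have eqA: "E - \<Union>\<F> = {a \<in> E. interior {w. (a, w) \<in> S} = {}}"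
  proof (intro set_eqI iffI)
    fix z assume z: "z \<in> E - \<Union>\<F>"
    have "interior {w. (z, w) \<in> S} = {}"
    proof (rule ccontr)
      assume ne: "interior {w. (z, w) \<in> S} \<noteq> {}"
      obtain Us where Us: "Us \<subseteq> \<B>" "interior {w. (z, w) \<in> S} = \<Union>Us" using B(3)[OF open_interior] by blast
      then obtain D where D: "D \<in> Us" "D \<noteq> {}" using ne by blast
      then have "D \<subseteq> {w. (z, w) \<in> S}" using Us interior_subset by blast
      then have "z \<in> Fd D" using z by (simp add: Fd_def)
      moreover have "Fd D \<in> \<F>" using D Us by (auto simp: \<F>_def)
      ultimately show False using z by blast
    qed
    then show "z \<in> {a \<in> E. interior {w. (a, w) \<in> S} = {}}" using z by blast
  next
    fix z assume z: "z \<in> {a \<in> E. interior {w. (a, w) \<in> S} = {}}"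
    have "z \<notin> \<Union>\<F>"
    proof
      assume "z \<in> \<Union>\<F>"
      then obtain D where D: "D \<in> \<B>" "D \<noteq> {}" "z \<in> Fd D" by (auto simp: \<F>_def)
      then have "D \<subseteq> {w. (z, w) \<in> S}" by (simp add: Fd_def)
      then have "D \<subseteq> interior {w. (z, w) \<in> S}" using B(2)[OF D(1)] by (rule interior_maximal)
      then show False using z D(2) by blast
    qed
    then show "z \<in> E - \<Union>\<F>" using z by blast
  qed
  show ?thesis
  proof (intro exI conjI ballI allI impI)
    show "countable \<F>" using B(1) by (simp add: \<F>_def)
  next
    fix F assume "F \<in> \<F>"
    then obtain D where "D \<in> \<B>" "D \<noteq> {}" "F = Fd D" by (auto simp: \<F>_def)
    then show "closedin (top_of_set E) F" "interior F = {}" using clF intF by auto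
    fix V assume "open V \<and> connected V \<and> V \<subseteq> E"
    then show "connected (V - F)" using connF \<open>D \<in> \<B>\<close> \<open>D \<noteq> {}\<close> \<open>F = Fd D\<close> by blast
  qed (rule eqA)
qed

lemma swap_hyps:
  fixes S :: "(complex \<times> complex) set" and E :: "complex set"
  assumes S_sub: "S \<subseteq> E \<times> E" and S_closed: "closedin (top_of_set (E \<times> E)) S"
    and S_int: "interior S = {}"
    and S_conn: "\<And>U. U \<subseteq> E \<times> E \<Longrightarrow> open U \<Longrightarrow> connected U \<Longrightarrow> U \<noteq> {} \<Longrightarrow> connected (U - S)"
  defines "S' \<equiv> prod.swap -` S"
  shows "S' \<subseteq> E \<times> E" "closedin (top_of_set (E \<times> E)) S'" "interior S' = {}"
    "\<And>U. U \<subseteq> E \<times> E \<Longrightarrow> open U \<Longrightarrow> connected U \<Longrightarrow> U \<noteq> {} \<Longrightarrow> connected (U - S')"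
    "{b \<in> E. interior {z. (z, b) \<in> S} = {}} = {a \<in> E. interior {w. (a, w) \<in> S'} = {}}"
proof -
  have mem: "(x, y) \<in> S' \<longleftrightarrow> (y, x) \<in> S" for x y by (simp add: S'_def)
  show "S' \<subseteq> E \<times> E" using S_sub by (auto simp: S'_def)
  obtain T where T: "closed T" "S = (E \<times> E) \<inter> T" using S_closed closedin_closed by blast
  have "closed (prod.swap -` T)" by (rule continuous_closed_vimage[OF T(1)]) (intro continuous_intros)
  moreover have "S' = (E \<times> E) \<inter> prod.swap -` T" using T(2) by (auto simp: S'_def)
  ultimately show "closedin (top_of_set (E \<times> E)) S'" using closedin_closed by blast
  show "interior S' = {}"
  proof (rule ccontr)
    assume "interior S' \<noteq> {}"
    then obtain x where x: "x \<in> interior S'" by blast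
    have o: "open (prod.swap -` interior S')"
      by (rule continuous_open_vimage[OF open_interior]) (intro continuous_intros)
    have "prod.swap -` interior S' \<subseteq> S" using interior_subset[of S'] by (auto simp: S'_def)
    then have "prod.swap -` interior S' \<subseteq> interior S" by (rule interior_maximal[OF _ o])
    moreover have "prod.swap x \<in> prod.swap -` interior S'" using x by simp
    ultimately show False using S_int by blast
  qed
  show "connected (U - S')" if U: "U \<subseteq> E \<times> E" "open U" "connected U" "U \<noteq> {}" for U
  proof -
    define U' where "U' = prod.swap -` U"
    have U'img: "U' = prod.swap ` U"
    proof
      show "U' \<subseteq> prod.swap ` U"
      proof
        fix p assume "p \<in> U'"
        then have "prod.swap p \<in> U" by (simp add: U'_def)
        moreover have "p = prod.swap (prod.swap p)" by simp
        ultimately show "p \<in> prod.swap ` U" by (rule image_eqI[rotated])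
      qed
      show "prod.swap ` U \<subseteq> U'" by (auto simp: U'_def)
    qed
    have "U' \<subseteq> E \<times> E" using U(1) by (auto simp: U'_def)
    moreover have "open U'" unfolding U'_def by (rule continuous_open_vimage[OF U(2)]) (intro continuous_intros)
    moreover have "connected U'" unfolding U'img using U(3) by (intro connected_continuous_image continuous_intros)
    moreover have "U' \<noteq> {}" using U(4) by (auto simp: U'img)
    ultimately have "connected (U' - S)" by (rule S_conn)
    then have "connected (prod.swap ` (U' - S))" by (intro connected_continuous_image continuous_intros)
    moreover have "prod.swap ` (U' - S) = U - S'"
    proof
      show "prod.swap ` (U' - S) \<subseteq> U - S'" by (auto simp: U'_def S'_def)
      show "U - S' \<subseteq> prod.swap ` (U' - S)"
      proof
        fix p assume "p \<in> U - S'"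
        then have "prod.swap p \<in> U' - S" by (simp add: U'_def S'_def)
        moreover have "p = prod.swap (prod.swap p)" by simp
        ultimately show "p \<in> prod.swap ` (U' - S)" by (rule image_eqI[rotated])
      qed
    qed
    ultimately show ?thesis by simp
  qed
  show "{b \<in> E. interior {z. (z, b) \<in> S} = {}} = {a \<in> E. interior {w. (a, w) \<in> S'} = {}}"
    by (simp add: mem)
qed

lemma props_from_S:
  fixes S :: "(complex \<times> complex) set" and E :: "complex set"
  assumes EE: "E = ball 0 1" and S_sub: "S \<subseteq> E \<times> E" and S_closed: "closedin (top_of_set (E \<times> E)) S"
    and S_int: "interior S = {}"
    and S_conn: "\<And>U. U \<subseteq> E \<times> E \<Longrightarrow> open U \<Longrightarrow> connected U \<Longrightarrow> U \<noteq> {} \<Longrightarrow> connected (U - S)"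
  defines "A \<equiv> {a \<in> E. interior {w. (a, w) \<in> S} = {}}"
  shows "(\<forall>z\<in>E. \<not> thin_at A z) \<and> E \<subseteq> closure A \<and> locally_regular A \<and> (\<forall>z\<in>E. rel_extremal_star A E z = 0)"
proof -
  have oE: "open E" by (simp add: EE)
  obtain \<F> where F: "countable \<F>" "\<forall>F\<in>\<F>. closedin (top_of_set E) F \<and> interior F = {} \<and>
            (\<forall>V. open V \<and> connected V \<and> V \<subseteq> E \<longrightarrow> connected (V - F))" "E - \<Union>\<F> = A"
    using fam[OF oE S_sub S_closed S_int S_conn] unfolding A_def by blast
  have C: "\<exists>z\<in>A. z \<noteq> z0 \<and> dist z z0 < \<rho> \<and> c \<le> u z"
    if "subharmonic_on \<Omega> u" "z0 \<in> \<Omega>" "z0 \<in> E" "c < u z0" "\<rho> > 0" for \<Omega> u z0 c \<rho>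
  proof -
    have "\<exists>z \<in> E - \<Union>\<F>. z \<noteq> z0 \<and> dist z z0 < \<rho> \<and> c \<le> u z"
      by (rule core[OF oE F(1) _ _ _ that]) (use F(2) in blast)+
    then show ?thesis using F(3) by simp
  qed
  have AE: "A \<subseteq> E" by (auto simp: A_def)
  show ?thesis by (rule final_props[OF oE C AE])
qed

theorem mainTheorem4:
  fixes S :: "(complex \<times> complex) set"
  defines "E \<equiv> ball (0::complex) 1"
  assumes S_sub: "S \<subseteq> E \<times> E"
    and S_closed: "closedin (top_of_set (E \<times> E)) S"
    and S_int: "interior S = {}"
    and S_conn: "\<And>U. U \<subseteq> E \<times> E \<Longrightarrow> open U \<Longrightarrow> connected U \<Longrightarrow> U \<noteq> {} \<Longrightarrow> connected (U - S)"
  defines "A \<equiv> {a \<in> E. interior {w. (a, w) \<in> S} = {}}"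
    and "B \<equiv> {b \<in> E. interior {z. (z, b) \<in> S} = {}}"
  shows "(\<forall>z\<in>E. \<not> thin_at A z) \<and> (\<forall>z\<in>E. \<not> thin_at B z)
         \<and> E \<subseteq> closure A \<and> E \<subseteq> closure B
         \<and> locally_regular A \<and> locally_regular B
         \<and> (\<forall>z\<in>E. rel_extremal_star A E z = 0) \<and> (\<forall>z\<in>E. rel_extremal_star B E z = 0)"
proof -
  have EE: "E = ball 0 1" by (simp add: E_def)
  have PA: "(\<forall>z\<in>E. \<not> thin_at A z) \<and> E \<subseteq> closure A \<and> locally_regular A \<and> (\<forall>z\<in>E. rel_extremal_star A E z = 0)"
    unfolding A_def by (rule props_from_S[OF EE S_sub S_closed S_int S_conn])
  define S' where "S' = prod.swap -` S"
  note sw = swap_hyps[OF S_sub S_closed S_int S_conn, folded S'_def]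
  have PB': "(\<forall>z\<in>E. \<not> thin_at {a \<in> E. interior {w. (a, w) \<in> S'} = {}} z) \<and>
      E \<subseteq> closure {a \<in> E. interior {w. (a, w) \<in> S'} = {}} \<and>
      locally_regular {a \<in> E. interior {w. (a, w) \<in> S'} = {}} \<and>
      (\<forall>z\<in>E. rel_extremal_star {a \<in> E. interior {w. (a, w) \<in> S'} = {}} E z = 0)"
    by (rule props_from_S[OF EE sw(1) sw(2) sw(3) sw(4)])
  have BB: "B = {a \<in> E. interior {w. (a, w) \<in> S'} = {}}" unfolding B_def by (rule sw(5))
  have PB: "(\<forall>z\<in>E. \<not> thin_at B z) \<and> E \<subseteq> closure B \<and> locally_regular B \<and> (\<forall>z\<in>E. rel_extremal_star B E z = 0)"
    unfolding BB by (rule PB')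
  show ?thesis using PA PB by blast
qed

end
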